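(* Let $\mathcal S=(S_1,\dots,S_s)\in B(H)^s$ be an $s$-tuple of selfadjoint operators. Then $\operatorname{Int}_{\mathbb R^s}W_{\rm e}(\mathcal S)\subset W_\infty(\mathcal S)$.
   Context: $H$ is an infinite-dimensional complex separable Hilbert space. $W_{\rm e}(\mathcal S)\subset\mathbb R^s$ is the set of all $\lambda\in\mathbb R^s$ for which there exists an orthonormal sequence $(x_k)$ with $\langle S_jx_k,x_k\rangle\to\lambda_j$ for all $j$. The infinite numerical range $W_\infty(\mathcal T)$ of a tuple $\mathcal T=(T_1,\dots,T_n)$ is the set of all $\lambda\in\mathbb C^n$ such that there is an orthogonal projection $P$ of infinite rank with $PT_jP=\lambda_jP$ for $j=1,\dots,n$. $\operatorname{Int}_{\mathbb R^s}$ denotes interior in $\mathbb R^s$. *)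

theory Defs
  imports "HOL-Analysis.Analysis"
begin

text \<open>Model of H: the complex sequence space l2(N). Every infinite-dimensional
complex separable Hilbert space is unitarily isomorphic to it.\<close>

type_synonym vec = "nat \<Rightarrow> complex"
type_synonym op = "vec \<Rightarrow> vec"

definition l2 :: "vec set" where
  "l2 = {x. summable (\<lambda>n. (cmod (x n))^2)}"

definition l2_inner :: "vec \<Rightarrow> vec \<Rightarrow> complex" where
  "l2_inner x y = (\<Sum>n. x n * cnj (y n))"

definition l2_norm :: "vec \<Rightarrow> real" where
  "l2_norm x = sqrt (\<Sum>n. (cmod (x n))^2)"

text \<open>Bounded (complex-linear) operators on l2, i.e. B(H); only their
action on l2 matters.\<close>
definition bounded_op :: "op \<Rightarrow> bool" where
  "bounded_op T \<longleftrightarrow>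
     (\<forall>x\<in>l2. T x \<in> l2) \<and>
     (\<forall>x\<in>l2. \<forall>y\<in>l2. T (\<lambda>n. x n + y n) = (\<lambda>n. T x n + T y n)) \<and>
     (\<forall>x\<in>l2. \<forall>c::complex. T (\<lambda>n. c * x n) = (\<lambda>n. c * T x n)) \<and>
     (\<exists>K. \<forall>x\<in>l2. l2_norm (T x) \<le> K * l2_norm x)"

definition selfadjoint_op :: "op \<Rightarrow> bool" where
  "selfadjoint_op T \<longleftrightarrow> bounded_op T \<and>
     (\<forall>x\<in>l2. \<forall>y\<in>l2. l2_inner (T x) y = l2_inner x (T y))"

definition orthonormal_seq :: "(nat \<Rightarrow> vec) \<Rightarrow> bool" where
  "orthonormal_seq e \<longleftrightarrow> (\<forall>k. e k \<in> l2) \<and>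
     (\<forall>i j. l2_inner (e i) (e j) = (if i = j then 1 else 0))"

definition orth_proj :: "op \<Rightarrow> bool" where
  "orth_proj P \<longleftrightarrow> selfadjoint_op P \<and> (\<forall>x\<in>l2. P (P x) = P x)"

text \<open>Infinite rank: the range P(H) is infinite-dimensional, i.e. contains an
infinite orthonormal sequence.\<close>
definition infinite_rank :: "op \<Rightarrow> bool" where
  "infinite_rank P \<longleftrightarrow> (\<exists>e. orthonormal_seq e \<and> (\<forall>k. e k \<in> P ` l2))"

definition We :: "('n::finite \<Rightarrow> op) \<Rightarrow> (real^'n) set" where
  "We S = {lam. \<exists>x. orthonormal_seq x \<and>
      (\<forall>j. (\<lambda>k. l2_inner (S j (x k)) (x k)) \<longlonglongrightarrow> complex_of_real (lam $ j))}"

definition Winf :: "('n::finite \<Rightarrow> op) \<Rightarrow> (complex^'n) set" where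
  "Winf T = {lam. \<exists>P. orth_proj P \<and> infinite_rank P \<and>
      (\<forall>j. \<forall>x\<in>l2. P (T j (P x)) = (\<lambda>n. lam $ j * P x n))}"

end

theory Submission
  imports Defs
begin


lemma l2_iff: "x \<in> l2 \<longleftrightarrow> summable (\<lambda>n. (cmod (x n))^2)"
  by (simp add: l2_def)

lemma l2_norm_sq: "x \<in> l2 \<Longrightarrow> (l2_norm x)^2 = (\<Sum>n. (cmod (x n))^2)"
  unfolding l2_norm_def l2_def by (auto intro!: suminf_nonneg)

lemma l2_norm_nonneg: "x \<in> l2 \<Longrightarrow> l2_norm x \<ge> 0"
  unfolding l2_norm_def l2_def by (auto intro!: suminf_nonneg)

lemma cmod_mult_le: "cmod a * cmod b \<le> ((cmod a)^2 + (cmod b)^2) / 2"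
proof -
  have "0 \<le> (cmod a - cmod b)^2" by simp
  thus ?thesis by (simp add: power2_diff)
qed

lemma summable_inner_norm:
  assumes "x \<in> l2" "y \<in> l2"
  shows "summable (\<lambda>n. norm (x n * cnj (y n)))"
proof (rule summable_comparison_test)
  show "\<exists>N. \<forall>n\<ge>N. norm (norm (x n * cnj (y n))) \<le> ((cmod (x n))^2 + (cmod (y n))^2) / 2"
    using cmod_mult_le by (auto simp: norm_mult)
  show "summable (\<lambda>n. ((cmod (x n))^2 + (cmod (y n))^2) / 2)"
    using assms by (intro summable_divide summable_add) (auto simp: l2_def)
qed

lemma summable_inner:
  assumes "x \<in> l2" "y \<in> l2"
  shows "summable (\<lambda>n. x n * cnj (y n))"
  by (rule summable_norm_cancel[OF summable_inner_norm[OF assms]])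

lemma l2_add: assumes "x \<in> l2" "y \<in> l2" shows "(\<lambda>n. x n + y n) \<in> l2"
  unfolding l2_def
proof (simp, rule summable_comparison_test)
  have "(cmod (x n + y n))^2 \<le> 2 * ((cmod (x n))^2 + (cmod (y n))^2)" for n
  proof -
    have "cmod (x n + y n) \<le> cmod (x n) + cmod (y n)" by (rule norm_triangle_ineq)
    hence "(cmod (x n + y n))^2 \<le> (cmod (x n) + cmod (y n))^2"
      by (simp add: power_mono)
    also have "\<dots> \<le> 2 * ((cmod (x n))^2 + (cmod (y n))^2)"
      using cmod_mult_le[of "x n" "y n"] by (simp add: power2_sum)
    finally show ?thesis .
  qed
  thus "\<exists>N. \<forall>n\<ge>N. norm ((cmod (x n + y n))^2) \<le> 2 * ((cmod (x n))^2 + (cmod (y n))^2)"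
    by auto
  show "summable (\<lambda>n. 2 * ((cmod (x n))^2 + (cmod (y n))^2))"
    using assms by (intro summable_mult summable_add) (auto simp: l2_def)
qed

lemma l2_scale: assumes "x \<in> l2" shows "(\<lambda>n. c * x n) \<in> l2"
  using summable_mult[OF assms[unfolded l2_def, simplified], of "(cmod c)^2"]
  by (simp add: l2_def norm_mult power_mult_distrib)

lemma l2_zero: "(\<lambda>n. 0) \<in> l2"
  by (simp add: l2_def)

lemma l2_minus: assumes "x \<in> l2" shows "(\<lambda>n. - x n) \<in> l2"
  using l2_scale[OF assms, of "-1"] by simp

lemma l2_diff: assumes "x \<in> l2" "y \<in> l2" shows "(\<lambda>n. x n - y n) \<in> l2"
  using l2_add[OF assms(1) l2_minus[OF assms(2)]] by simp

lemma l2_sum: assumes "\<And>a. a \<in> A \<Longrightarrow> f a \<in> l2" shows "(\<lambda>n. \<Sum>a\<in>A. f a n) \<in> l2"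
  using assms
proof (induction A rule: infinite_finite_induct)
  case (infinite A) then show ?case by (simp add: l2_zero)
next
  case empty then show ?case by (simp add: l2_zero)
next
  case (insert a A)
  then show ?case using l2_add[of "f a" "\<lambda>n. \<Sum>a\<in>A. f a n"] by simp
qed

lemma l2inner_sums: "x \<in> l2 \<Longrightarrow> y \<in> l2 \<Longrightarrow> (\<lambda>n. x n * cnj (y n)) sums l2_inner x y"
  unfolding l2_inner_def by (rule summable_sums[OF summable_inner])

lemma l2inner_add_left:
  assumes "x \<in> l2" "y \<in> l2" "z \<in> l2"
  shows "l2_inner (\<lambda>n. x n + y n) z = l2_inner x z + l2_inner y z"
proof -
  have "(\<lambda>n. (x n + y n) * cnj (z n)) = (\<lambda>n. x n * cnj (z n) + y n * cnj (z n))"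
    by (simp add: distrib_right)
  moreover have "(\<lambda>n. x n * cnj (z n) + y n * cnj (z n)) sums (l2_inner x z + l2_inner y z)"
    using l2inner_sums assms by (intro sums_add) auto
  ultimately show ?thesis unfolding l2_inner_def by (simp add: sums_iff)
qed

lemma l2inner_scale_left:
  assumes "x \<in> l2" "z \<in> l2"
  shows "l2_inner (\<lambda>n. c * x n) z = c * l2_inner x z"
proof -
  have "(\<lambda>n. c * (x n * cnj (z n))) sums (c * l2_inner x z)"
    using l2inner_sums[OF assms] by (rule sums_mult)
  thus ?thesis unfolding l2_inner_def by (simp add: sums_iff mult.assoc)
qed

lemma l2inner_cnj:
  assumes "x \<in> l2" "y \<in> l2"
  shows "l2_inner y x = cnj (l2_inner x y)"
proof -
  have "(\<lambda>n. cnj (x n * cnj (y n))) sums cnj (l2_inner x y)"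
    using l2inner_sums[OF assms] by (subst sums_cnj)
  thus ?thesis unfolding l2_inner_def by (simp add: sums_iff mult.commute)
qed

lemma l2inner_zero_left: "l2_inner (\<lambda>n. 0) y = 0"
  by (simp add: l2_inner_def)

lemma l2inner_zero_right: "l2_inner x (\<lambda>n. 0) = 0"
  by (simp add: l2_inner_def)

lemma l2inner_minus_left:
  assumes "x \<in> l2" "z \<in> l2"
  shows "l2_inner (\<lambda>n. - x n) z = - l2_inner x z"
  using l2inner_scale_left[OF assms, of "-1"] by simp

lemma l2inner_diff_left:
  assumes "x \<in> l2" "y \<in> l2" "z \<in> l2"
  shows "l2_inner (\<lambda>n. x n - y n) z = l2_inner x z - l2_inner y z"
  using l2inner_add_left[OF assms(1) l2_minus[OF assms(2)] assms(3)] l2inner_minus_left[OF assms(2,3)]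
  by simp

lemma l2inner_sum_left:
  assumes "\<And>a. a \<in> A \<Longrightarrow> f a \<in> l2" "z \<in> l2"
  shows "l2_inner (\<lambda>n. \<Sum>a\<in>A. f a n) z = (\<Sum>a\<in>A. l2_inner (f a) z)"
  using assms(1)
proof (induction A rule: infinite_finite_induct)
  case (infinite A) then show ?case by (simp add: l2inner_zero_left)
next
  case empty then show ?case by (simp add: l2inner_zero_left)
next
  case (insert a A)
  then show ?case
    using l2inner_add_left[of "f a" "\<lambda>n. \<Sum>a\<in>A. f a n" z] l2_sum[of A f] assms(2) by simp
qed

lemma l2inner_add_right:
  assumes "x \<in> l2" "y \<in> l2" "z \<in> l2"
  shows "l2_inner z (\<lambda>n. x n + y n) = l2_inner z x + l2_inner z y"
proof -
  have "l2_inner z (\<lambda>n. x n + y n) = cnj (l2_inner (\<lambda>n. x n + y n) z)"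
    by (rule l2inner_cnj[OF l2_add[OF assms(1,2)] assms(3)])
  thus ?thesis using l2inner_add_left[OF assms] l2inner_cnj[OF assms(1,3)] l2inner_cnj[OF assms(2,3)] by simp
qed

lemma l2inner_scale_right:
  assumes "x \<in> l2" "z \<in> l2"
  shows "l2_inner z (\<lambda>n. c * x n) = cnj c * l2_inner z x"
proof -
  have "l2_inner z (\<lambda>n. c * x n) = cnj (l2_inner (\<lambda>n. c * x n) z)"
    by (rule l2inner_cnj[OF l2_scale[OF assms(1)] assms(2)])
  thus ?thesis using l2inner_scale_left[OF assms] l2inner_cnj[OF assms] by simp
qed

lemma l2inner_diff_right:
  assumes "x \<in> l2" "y \<in> l2" "z \<in> l2"
  shows "l2_inner z (\<lambda>n. x n - y n) = l2_inner z x - l2_inner z y"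
proof -
  have "l2_inner z (\<lambda>n. x n - y n) = cnj (l2_inner (\<lambda>n. x n - y n) z)"
    by (rule l2inner_cnj[OF l2_diff[OF assms(1,2)] assms(3)])
  thus ?thesis using l2inner_diff_left[OF assms] l2inner_cnj[OF assms(1,3)] l2inner_cnj[OF assms(2,3)] by simp
qed

lemma l2inner_sum_right:
  assumes "\<And>a. a \<in> A \<Longrightarrow> f a \<in> l2" "z \<in> l2"
  shows "l2_inner z (\<lambda>n. \<Sum>a\<in>A. f a n) = (\<Sum>a\<in>A. l2_inner z (f a))"
proof -
  have "l2_inner z (\<lambda>n. \<Sum>a\<in>A. f a n) = cnj (l2_inner (\<lambda>n. \<Sum>a\<in>A. f a n) z)"
    by (rule l2inner_cnj[OF l2_sum assms(2)]) (rule assms(1))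
  also have "\<dots> = (\<Sum>a\<in>A. cnj (l2_inner (f a) z))" using l2inner_sum_left[of A f z] assms by simp
  also have "\<dots> = (\<Sum>a\<in>A. l2_inner z (f a))" using l2inner_cnj[OF assms(1) assms(2)] by (intro sum.cong) auto
  finally show ?thesis .
qed

lemma l2inner_self: assumes "x \<in> l2" shows "l2_inner x x = complex_of_real ((l2_norm x)^2)"
proof -
  have "(\<lambda>n. complex_of_real ((cmod (x n))^2)) sums complex_of_real (\<Sum>n. (cmod (x n))^2)"
    by (rule sums_of_real[OF summable_sums]) (use assms in \<open>simp add: l2_def\<close>)
  moreover have "\<And>n. x n * cnj (x n) = complex_of_real ((cmod (x n))^2)"
    by (simp add: complex_mult_cnj cmod_power2)
  ultimately show ?thesis using l2_norm_sq[OF assms] unfolding l2_inner_def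
    by (simp add: sums_iff)
qed

lemma l2_norm_eq: "x \<in> l2 \<Longrightarrow> l2_norm x = sqrt (Re (l2_inner x x))"
  using l2inner_self l2_norm_nonneg by simp



lemma mult_cnj_sq: "c * cnj c = complex_of_real ((cmod c)^2)"
  by (simp add: complex_mult_cnj cmod_power2)

lemma summable_bounded_nonneg:
  fixes a :: "nat \<Rightarrow> real"
  assumes "\<And>n. 0 \<le> a n" "\<And>N. sum a {..<N} \<le> B"
  shows "summable a" "suminf a \<le> B"
proof -
  show "summable a"
  proof (rule bounded_imp_summable[of a B])
    fix n show "sum a {..n} \<le> B" using assms(2)[of "Suc n"] by (simp only: lessThan_Suc_atMost)
  qed (rule assms(1))
  thus "suminf a \<le> B" by (rule suminf_le_const[OF _ assms(2)])
qed

lemma sum_mult_cnj: "(\<Sum>i\<in>A. c i * cnj (c i)) = complex_of_real (\<Sum>i\<in>A. (cmod (c i))^2)"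
  by (simp only: of_real_sum mult_cnj_sq)

lemma l2inner_self_nonneg: "x \<in> l2 \<Longrightarrow> 0 \<le> Re (l2_inner x x)"
  using l2inner_self[of x] by simp

lemma cauchy_schwarz:
  assumes "x \<in> l2" "y \<in> l2"
  shows "cmod (l2_inner x y) \<le> l2_norm x * l2_norm y"
proof -
  have "cmod (l2_inner x y) \<le> (\<Sum>n. norm (x n * cnj (y n)))"
    unfolding l2_inner_def by (rule summable_norm[OF summable_inner_norm[OF assms]])
  also have "\<dots> \<le> l2_norm x * l2_norm y"
  proof (rule suminf_le_const[OF summable_inner_norm[OF assms]])
    fix N
    have "(\<Sum>n<N. norm (x n * cnj (y n))) = (\<Sum>n<N. \<bar>cmod (x n)\<bar> * \<bar>cmod (y n)\<bar>)"
      by (simp add: norm_mult)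
    also have "\<dots> \<le> L2_set (\<lambda>n. cmod (x n)) {..<N} * L2_set (\<lambda>n. cmod (y n)) {..<N}"
      by (rule L2_set_mult_ineq)
    also have "\<dots> \<le> l2_norm x * l2_norm y"
    proof (rule mult_mono)
      show "L2_set (\<lambda>n. cmod (x n)) {..<N} \<le> l2_norm x"
        unfolding L2_set_def l2_norm_def using assms(1)
        by (auto intro!: sum_le_suminf simp: l2_def)
      show "L2_set (\<lambda>n. cmod (y n)) {..<N} \<le> l2_norm y"
        unfolding L2_set_def l2_norm_def using assms(2)
        by (auto intro!: sum_le_suminf simp: l2_def)
      show "0 \<le> l2_norm x" by (rule l2_norm_nonneg[OF assms(1)])
      show "0 \<le> L2_set (\<lambda>n. cmod (y n)) {..<N}" by (rule L2_set_nonneg)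
    qed
    finally show "(\<Sum>n<N. norm (x n * cnj (y n))) \<le> l2_norm x * l2_norm y" .
  qed
  finally show ?thesis .
qed

definition lc :: "nat set \<Rightarrow> (nat \<Rightarrow> complex) \<Rightarrow> (nat \<Rightarrow> vec) \<Rightarrow> vec" where
  "lc A c e = (\<lambda>n. \<Sum>i\<in>A. c i * e i n)"

definition onb_on :: "nat set \<Rightarrow> (nat \<Rightarrow> vec) \<Rightarrow> bool" where
  "onb_on A e \<longleftrightarrow> (\<forall>i\<in>A. e i \<in> l2) \<and>
     (\<forall>i\<in>A. \<forall>j\<in>A. l2_inner (e i) (e j) = (if i = j then 1 else 0))"

lemma orthonormal_seq_onb: "orthonormal_seq e \<Longrightarrow> onb_on A e"
  by (simp add: orthonormal_seq_def onb_on_def)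

lemma onb_on_l2: "onb_on A e \<Longrightarrow> i \<in> A \<Longrightarrow> e i \<in> l2"
  by (simp add: onb_on_def)

lemma onb_on_inner: "onb_on A e \<Longrightarrow> i \<in> A \<Longrightarrow> j \<in> A \<Longrightarrow> l2_inner (e i) (e j) = (if i = j then 1 else 0)"
  by (simp add: onb_on_def)

lemma onb_on_subset: "onb_on A e \<Longrightarrow> B \<subseteq> A \<Longrightarrow> onb_on B e"
  unfolding onb_on_def by blast

lemma lc_l2: "(\<And>i. i \<in> A \<Longrightarrow> e i \<in> l2) \<Longrightarrow> lc A c e \<in> l2"
  unfolding lc_def by (rule l2_sum) (rule l2_scale, simp)

lemma inner_lc_left:
  assumes "\<And>i. i \<in> A \<Longrightarrow> e i \<in> l2" "y \<in> l2"
  shows "l2_inner (lc A c e) y = (\<Sum>i\<in>A. c i * l2_inner (e i) y)"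
proof -
  have "l2_inner (lc A c e) y = (\<Sum>i\<in>A. l2_inner (\<lambda>n. c i * e i n) y)"
    unfolding lc_def by (rule l2inner_sum_left) (use assms l2_scale in auto)
  also have "\<dots> = (\<Sum>i\<in>A. c i * l2_inner (e i) y)"
    by (rule sum.cong[OF refl]) (rule l2inner_scale_left, use assms in auto)
  finally show ?thesis .
qed

lemma inner_lc_right:
  assumes "\<And>i. i \<in> A \<Longrightarrow> e i \<in> l2" "y \<in> l2"
  shows "l2_inner y (lc A c e) = (\<Sum>i\<in>A. cnj (c i) * l2_inner y (e i))"
proof -
  have "l2_inner y (lc A c e) = (\<Sum>i\<in>A. l2_inner y (\<lambda>n. c i * e i n))"
    unfolding lc_def by (rule l2inner_sum_right) (use assms l2_scale in auto)
  also have "\<dots> = (\<Sum>i\<in>A. cnj (c i) * l2_inner y (e i))"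
    by (rule sum.cong[OF refl]) (rule l2inner_scale_right, use assms in auto)
  finally show ?thesis .
qed

lemma inner_lc_basis:
  assumes "onb_on A e" "finite A" "k \<in> A"
  shows "l2_inner (lc A c e) (e k) = c k"
proof -
  have "l2_inner (lc A c e) (e k) = (\<Sum>i\<in>A. c i * l2_inner (e i) (e k))"
    by (rule inner_lc_left) (use assms onb_on_l2 in auto)
  also have "\<dots> = (\<Sum>i\<in>A. (if i = k then c i else 0))"
    using assms by (intro sum.cong) (auto simp: onb_on_inner)
  also have "\<dots> = c k" using assms by simp
  finally show ?thesis .
qed

lemma inner_lc_lc:
  assumes "onb_on A e" "finite A"
  shows "l2_inner (lc A c e) (lc A d e) = (\<Sum>i\<in>A. c i * cnj (d i))"
proof -
  have l: "lc A d e \<in> l2" by (rule lc_l2) (use assms onb_on_l2 in auto)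
  have "l2_inner (lc A c e) (lc A d e) = (\<Sum>i\<in>A. c i * l2_inner (e i) (lc A d e))"
    by (rule inner_lc_left) (use assms onb_on_l2 l in auto)
  also have "\<dots> = (\<Sum>i\<in>A. c i * cnj (d i))"
  proof (rule sum.cong[OF refl])
    fix i assume i: "i \<in> A"
    have "l2_inner (e i) (lc A d e) = cnj (l2_inner (lc A d e) (e i))"
      by (rule l2inner_cnj[OF l]) (use assms i onb_on_l2 in auto)
    also have "\<dots> = cnj (d i)" using inner_lc_basis[OF assms i] by simp
    finally show "c i * l2_inner (e i) (lc A d e) = c i * cnj (d i)" by simp
  qed
  finally show ?thesis .
qed

lemma norm_lc_sq:
  assumes "onb_on A e" "finite A"
  shows "(l2_norm (lc A c e))^2 = (\<Sum>i\<in>A. (cmod (c i))^2)"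
proof -
  have l: "lc A c e \<in> l2" by (rule lc_l2) (use assms onb_on_l2 in auto)
  have "complex_of_real ((l2_norm (lc A c e))^2) = (\<Sum>i\<in>A. c i * cnj (c i))"
    using l2inner_self[OF l] inner_lc_lc[OF assms] by simp
  also have "\<dots> = complex_of_real (\<Sum>i\<in>A. (cmod (c i))^2)"
    by (rule sum_mult_cnj)
  finally show ?thesis using of_real_eq_iff by blast
qed

lemma bessel_finite:
  assumes "onb_on A e" "finite A" "x \<in> l2"
  shows "(\<Sum>i\<in>A. (cmod (l2_inner x (e i)))^2) \<le> (l2_norm x)^2"
proof -
  define c where "c = (\<lambda>i. l2_inner x (e i))"
  define s where "s = lc A c e"
  have el: "\<And>i. i \<in> A \<Longrightarrow> e i \<in> l2" using assms onb_on_l2 by blast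
  have sl: "s \<in> l2" unfolding s_def by (rule lc_l2) (rule el)
  define q where "q = (\<Sum>i\<in>A. (cmod (c i))^2)"
  have xs: "l2_inner x s = complex_of_real q"
  proof -
    have "l2_inner x s = (\<Sum>i\<in>A. cnj (c i) * c i)"
      unfolding s_def using inner_lc_right[OF el assms(3)] c_def by simp
    also have "\<dots> = complex_of_real q" unfolding q_def
      using sum_mult_cnj[of c A] by (simp add: mult.commute)
    finally show ?thesis .
  qed
  have sx: "l2_inner s x = complex_of_real q"
    using l2inner_cnj[OF assms(3) sl] xs by simp
  have ss: "l2_inner s s = complex_of_real q"
    unfolding s_def q_def using inner_lc_lc[OF assms(1,2)] sum_mult_cnj[of c A] by simp
  have d: "(\<lambda>n. x n - s n) \<in> l2" by (rule l2_diff[OF assms(3) sl])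
  have "l2_inner (\<lambda>n. x n - s n) (\<lambda>n. x n - s n) =
        l2_inner x x - l2_inner x s - (l2_inner s x - l2_inner s s)"
    using l2inner_diff_left[OF assms(3) sl d] l2inner_diff_right[OF assms(3) sl assms(3)]
      l2inner_diff_right[OF assms(3) sl sl] by simp
  also have "\<dots> = complex_of_real ((l2_norm x)^2 - q)"
    using l2inner_self[OF assms(3)] xs sx ss by simp
  finally have "0 \<le> (l2_norm x)^2 - q" using l2inner_self_nonneg[OF d] by simp
  thus ?thesis unfolding q_def c_def by simp
qed

lemma bessel_seq:
  assumes "orthonormal_seq e" "x \<in> l2"
  shows "summable (\<lambda>k. (cmod (l2_inner x (e k)))^2)"
    "(\<Sum>k. (cmod (l2_inner x (e k)))^2) \<le> (l2_norm x)^2"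
  using summable_bounded_nonneg[of "\<lambda>k. (cmod (l2_inner x (e k)))^2" "(l2_norm x)^2"]
    bessel_finite[OF orthonormal_seq_onb[OF assms(1)] finite_lessThan assms(2)]
  by auto

lemma bessel_seq_tendsto:
  assumes "orthonormal_seq e" "x \<in> l2"
  shows "(\<lambda>k. l2_inner x (e k)) \<longlonglongrightarrow> 0"
proof -
  have "(\<lambda>k. (cmod (l2_inner x (e k)))^2) \<longlonglongrightarrow> 0"
    by (rule summable_LIMSEQ_zero[OF bessel_seq(1)[OF assms]])
  hence "(\<lambda>k. sqrt ((cmod (l2_inner x (e k)))^2)) \<longlonglongrightarrow> sqrt 0"
    by (intro tendsto_real_sqrt)
  hence "(\<lambda>k. cmod (l2_inner x (e k))) \<longlonglongrightarrow> 0" by simp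
  thus ?thesis by (simp add: tendsto_norm_zero_iff)
qed



definition ser :: "(nat \<Rightarrow> complex) \<Rightarrow> (nat \<Rightarrow> vec) \<Rightarrow> vec" where
  "ser c e = (\<lambda>n. \<Sum>k. c k * e k n)"

definition delta :: "nat \<Rightarrow> vec" where
  "delta n = (\<lambda>m. if m = n then 1 else 0)"

lemma delta_l2: "delta n \<in> l2"
proof -
  have "summable (\<lambda>m. if m = n then (cmod (1::complex))^2 else 0)"
    by (rule summable_single)
  moreover have "(\<lambda>m. (cmod (delta n m))^2) = (\<lambda>m. if m = n then (cmod (1::complex))^2 else 0)"
    by (auto simp: delta_def)
  ultimately show ?thesis by (simp add: l2_def)
qed

lemma l2inner_delta: "l2_inner (delta n) y = cnj (y n)"
proof -
  have "(\<lambda>m. delta n m * cnj (y m)) = (\<lambda>m. if m = n then cnj (y m) else 0)"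
    by (auto simp: delta_def)
  thus ?thesis unfolding l2_inner_def using sums_single[of n "\<lambda>m. cnj (y m)"]
    by (simp add: sums_iff)
qed

lemma summable_coord:
  assumes "orthonormal_seq e"
  shows "summable (\<lambda>k. (cmod (e k n))^2)"
proof -
  have "summable (\<lambda>k. (cmod (l2_inner (delta n) (e k)))^2)"
    by (rule bessel_seq(1)[OF assms delta_l2])
  thus ?thesis by (simp add: l2inner_delta)
qed

lemma ser_summable:
  assumes "orthonormal_seq e" "summable (\<lambda>k. (cmod (c k))^2)"
  shows "summable (\<lambda>k. c k * e k n)"
proof -
  have "summable (\<lambda>k. norm (c k * e k n))"
  proof (rule summable_comparison_test)
    show "\<exists>N. \<forall>k\<ge>N. norm (norm (c k * e k n)) \<le> ((cmod (c k))^2 + (cmod (e k n))^2) / 2"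
      using cmod_mult_le by (simp add: norm_mult)
    show "summable (\<lambda>k. ((cmod (c k))^2 + (cmod (e k n))^2) / 2)"
      by (intro summable_divide summable_add assms(2) summable_coord[OF assms(1)])
  qed
  thus ?thesis by (rule summable_norm_cancel)
qed

lemma sum_split_lt: "N \<le> (M::nat) \<Longrightarrow> sum f {..<M} = sum f {..<N} + sum f {N..<M}"
  by (metis atLeast0LessThan le0 sum.atLeastLessThan_concat)

lemma lc_split:
  assumes "N \<le> M"
  shows "(\<lambda>n. lc {..<M} c e n - lc {..<N} c e n) = lc {N..<M} c e"
proof -
  have "\<And>n. lc {..<M} c e n = lc {..<N} c e n + lc {N..<M} c e n"
    unfolding lc_def by (rule sum_split_lt[OF assms])
  thus ?thesis by auto
qed

lemma ser_props:
  assumes e: "orthonormal_seq e" and c: "summable (\<lambda>k. (cmod (c k))^2)"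
  shows "ser c e \<in> l2" "(l2_norm (ser c e))^2 \<le> (\<Sum>k. (cmod (c k))^2)"
    "\<And>y. y \<in> l2 \<Longrightarrow> (\<lambda>k. c k * l2_inner (e k) y) sums l2_inner (ser c e) y"
proof -
  define u where "u = ser c e"
  define s where "s = (\<lambda>N. lc {..<N} c e)"
  define T where "T = (\<lambda>N. (\<Sum>k. (cmod (c k))^2) - (\<Sum>k<N. (cmod (c k))^2))"
  have el: "\<And>k. e k \<in> l2" using e by (simp add: orthonormal_seq_def)
  have sl: "\<And>N. s N \<in> l2" unfolding s_def by (rule lc_l2) (rule el)
  have onb: "\<And>A. onb_on A e" by (rule orthonormal_seq_onb[OF e])
  have Tpos: "\<And>N. (\<Sum>k<N. (cmod (c k))^2) \<le> (\<Sum>k. (cmod (c k))^2)"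
    by (rule sum_le_suminf[OF c]) auto
  have T0: "T \<longlonglongrightarrow> 0"
  proof -
    have "(\<lambda>N. \<Sum>k<N. (cmod (c k))^2) \<longlonglongrightarrow> (\<Sum>k. (cmod (c k))^2)"
      by (rule summable_LIMSEQ[OF c])
    hence "(\<lambda>N. (\<Sum>k. (cmod (c k))^2) - (\<Sum>k<N. (cmod (c k))^2)) \<longlonglongrightarrow>
        (\<Sum>k. (cmod (c k))^2) - (\<Sum>k. (cmod (c k))^2)"
      by (intro tendsto_diff tendsto_const)
    thus ?thesis unfolding T_def by simp
  qed
  have pt: "\<And>n. (\<lambda>M. s M n) \<longlonglongrightarrow> u n"
    unfolding s_def u_def ser_def lc_def
    by (rule summable_LIMSEQ[OF ser_summable[OF e c]])
  have blk: "\<And>N M. N \<le> M \<Longrightarrow> (l2_norm (\<lambda>n. s M n - s N n))^2 \<le> T N"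
  proof -
    fix N M :: nat assume NM: "N \<le> M"
    have "(l2_norm (\<lambda>n. s M n - s N n))^2 = (\<Sum>k\<in>{N..<M}. (cmod (c k))^2)"
      unfolding s_def lc_split[OF NM] by (rule norm_lc_sq[OF onb]) simp
    also have "\<dots> = (\<Sum>k<M. (cmod (c k))^2) - (\<Sum>k<N. (cmod (c k))^2)"
    proof -
      have "(\<Sum>k<M. (cmod (c k))^2) = (\<Sum>k<N. (cmod (c k))^2) + (\<Sum>k\<in>{N..<M}. (cmod (c k))^2)"
        by (rule sum_split_lt[OF NM])
      thus ?thesis by simp
    qed
    also have "\<dots> \<le> T N" unfolding T_def using Tpos[of M] by simp
    finally show "(l2_norm (\<lambda>n. s M n - s N n))^2 \<le> T N" .
  qed
  have vN: "summable (\<lambda>n. (cmod (u n - s N n))^2) \<and> (\<Sum>n. (cmod (u n - s N n))^2) \<le> T N" for N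
  proof -
    have fin: "(\<Sum>n<L. (cmod (u n - s N n))^2) \<le> T N" for L
    proof (rule LIMSEQ_le_const2)
      show "(\<lambda>M. \<Sum>n<L. (cmod (s M n - s N n))^2) \<longlonglongrightarrow> (\<Sum>n<L. (cmod (u n - s N n))^2)"
        by (intro tendsto_sum tendsto_power tendsto_norm tendsto_diff pt tendsto_const)
      show "\<exists>M0. \<forall>M\<ge>M0. (\<Sum>n<L. (cmod (s M n - s N n))^2) \<le> T N"
      proof (intro exI allI impI)
        fix M assume NM: "N \<le> M"
        have dl: "(\<lambda>n. s M n - s N n) \<in> l2" by (rule l2_diff[OF sl sl])
        have "(\<Sum>n<L. (cmod (s M n - s N n))^2) \<le> (\<Sum>n. (cmod (s M n - s N n))^2)"
          by (rule sum_le_suminf) (use dl in \<open>auto simp: l2_def\<close>)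
        also have "\<dots> = (l2_norm (\<lambda>n. s M n - s N n))^2" by (rule l2_norm_sq[OF dl, symmetric])
        also have "\<dots> \<le> T N" by (rule blk[OF NM])
        finally show "(\<Sum>n<L. (cmod (s M n - s N n))^2) \<le> T N" .
      qed
    qed
    show ?thesis using summable_bounded_nonneg[of "\<lambda>n. (cmod (u n - s N n))^2" "T N"] fin by auto
  qed
  have vl: "(\<lambda>n. u n - s N n) \<in> l2" for N using vN[of N] by (simp add: l2_def)
  have vnorm: "(l2_norm (\<lambda>n. u n - s N n))^2 \<le> T N" for N
    using vN[of N] l2_norm_sq[OF vl[of N]] by simp
  have ul: "u \<in> l2"
  proof -
    have "(\<lambda>n. (u n - s 0 n) + s 0 n) \<in> l2" by (rule l2_add[OF vl sl])
    thus ?thesis by simp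
  qed
  thus "ser c e \<in> l2" unfolding u_def .
  have s0: "s 0 = (\<lambda>n. 0)" unfolding s_def lc_def by simp
  show "(l2_norm (ser c e))^2 \<le> (\<Sum>k. (cmod (c k))^2)"
    using vnorm[of 0] unfolding s0 T_def u_def by simp
  fix y assume yl: "y \<in> l2"
  have "(\<lambda>N. l2_inner (\<lambda>n. u n - s N n) y) \<longlonglongrightarrow> 0"
  proof (rule Lim_null_comparison)
    show "\<forall>\<^sub>F N in sequentially. norm (l2_inner (\<lambda>n. u n - s N n) y) \<le> sqrt (T N) * l2_norm y"
    proof (intro always_eventually allI)
      fix N
      have "norm (l2_inner (\<lambda>n. u n - s N n) y) \<le> l2_norm (\<lambda>n. u n - s N n) * l2_norm y"
        by (rule cauchy_schwarz[OF vl yl])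
      also have "\<dots> \<le> sqrt (T N) * l2_norm y"
      proof (rule mult_right_mono[OF _ l2_norm_nonneg[OF yl]])
        have "sqrt ((l2_norm (\<lambda>n. u n - s N n))^2) \<le> sqrt (T N)"
          using vnorm[of N] by (rule real_sqrt_le_mono)
        thus "l2_norm (\<lambda>n. u n - s N n) \<le> sqrt (T N)" using l2_norm_nonneg[OF vl[of N]] by simp
      qed
      finally show "norm (l2_inner (\<lambda>n. u n - s N n) y) \<le> sqrt (T N) * l2_norm y" .
    qed
    have "(\<lambda>N. sqrt (T N) * l2_norm y) \<longlonglongrightarrow> sqrt 0 * l2_norm y"
      by (intro tendsto_mult tendsto_real_sqrt T0 tendsto_const)
    thus "(\<lambda>N. sqrt (T N) * l2_norm y) \<longlonglongrightarrow> 0" by simp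
  qed
  moreover have "\<And>N. l2_inner (\<lambda>n. u n - s N n) y = l2_inner u y - (\<Sum>k<N. c k * l2_inner (e k) y)"
  proof -
    fix N
    have "l2_inner (\<lambda>n. u n - s N n) y = l2_inner u y - l2_inner (s N) y"
      by (rule l2inner_diff_left[OF ul sl yl])
    also have "l2_inner (s N) y = (\<Sum>k<N. c k * l2_inner (e k) y)"
      unfolding s_def by (rule inner_lc_left[OF el yl])
    finally show "l2_inner (\<lambda>n. u n - s N n) y = l2_inner u y - (\<Sum>k<N. c k * l2_inner (e k) y)" .
  qed
  ultimately have "(\<lambda>N. l2_inner u y - (\<Sum>k<N. c k * l2_inner (e k) y)) \<longlonglongrightarrow> 0" by simp
  hence "(\<lambda>N. l2_inner u y - (l2_inner u y - (\<Sum>k<N. c k * l2_inner (e k) y))) \<longlonglongrightarrow> l2_inner u y - 0"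
    by (intro tendsto_diff tendsto_const)
  thus "(\<lambda>k. c k * l2_inner (e k) y) sums l2_inner (ser c e) y"
    unfolding sums_def u_def by simp
qed



definition Pop :: "(nat \<Rightarrow> vec) \<Rightarrow> op" where
  "Pop e x = ser (\<lambda>k. l2_inner x (e k)) e"

context
  fixes e :: "nat \<Rightarrow> vec"
  assumes e: "orthonormal_seq e"
begin

lemma el: "e k \<in> l2" using e by (simp add: orthonormal_seq_def)

lemma einner: "l2_inner (e i) (e k) = (if i = k then 1 else 0)"
  using e by (simp add: orthonormal_seq_def)

lemma coef_summable: "x \<in> l2 \<Longrightarrow> summable (\<lambda>k. (cmod (l2_inner x (e k)))^2)"
  by (rule bessel_seq(1)[OF e])

lemma P_l2: "x \<in> l2 \<Longrightarrow> Pop e x \<in> l2"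
  unfolding Pop_def by (rule ser_props(1)[OF e coef_summable])

lemma P_normsq: "x \<in> l2 \<Longrightarrow> (l2_norm (Pop e x))^2 \<le> (l2_norm x)^2"
  unfolding Pop_def using ser_props(2)[OF e coef_summable] bessel_seq(2)[OF e] by force

lemma P_norm: assumes "x \<in> l2" shows "l2_norm (Pop e x) \<le> 1 * l2_norm x"
  using power2_le_imp_le[OF P_normsq[OF assms] l2_norm_nonneg[OF assms]] by simp

lemma P_inner: "x \<in> l2 \<Longrightarrow> y \<in> l2 \<Longrightarrow>
    (\<lambda>k. l2_inner x (e k) * l2_inner (e k) y) sums l2_inner (Pop e x) y"
  unfolding Pop_def by (rule ser_props(3)[OF e coef_summable])

lemma P_add:
  assumes "x \<in> l2" "y \<in> l2"
  shows "Pop e (\<lambda>n. x n + y n) = (\<lambda>n. Pop e x n + Pop e y n)"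
proof
  fix n
  have "Pop e (\<lambda>n. x n + y n) n = (\<Sum>k. l2_inner x (e k) * e k n + l2_inner y (e k) * e k n)"
    unfolding Pop_def ser_def using l2inner_add_left[OF assms el] by (simp add: distrib_right)
  also have "\<dots> = Pop e x n + Pop e y n"
    unfolding Pop_def ser_def
    by (rule suminf_add[symmetric]; rule ser_summable[OF e coef_summable]) (use assms in auto)
  finally show "Pop e (\<lambda>n. x n + y n) n = Pop e x n + Pop e y n" .
qed

lemma P_scale:
  assumes "x \<in> l2"
  shows "Pop e (\<lambda>n. c * x n) = (\<lambda>n. c * Pop e x n)"
proof
  fix n
  have "Pop e (\<lambda>n. c * x n) n = (\<Sum>k. c * (l2_inner x (e k) * e k n))"
    unfolding Pop_def ser_def using l2inner_scale_left[OF assms el] by (simp add: mult.assoc)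
  also have "\<dots> = c * Pop e x n"
    unfolding Pop_def ser_def
    by (rule suminf_mult; rule ser_summable[OF e coef_summable]) (use assms in auto)
  finally show "Pop e (\<lambda>n. c * x n) n = c * Pop e x n" .
qed

lemma P_bounded: "bounded_op (Pop e)"
  unfolding bounded_op_def using P_l2 P_add P_scale P_norm by blast

lemma P_selfadj:
  assumes "x \<in> l2" "y \<in> l2"
  shows "l2_inner (Pop e x) y = l2_inner x (Pop e y)"
proof -
  have 1: "(\<lambda>k. l2_inner x (e k) * l2_inner (e k) y) sums l2_inner (Pop e x) y"
    by (rule P_inner[OF assms])
  have "(\<lambda>k. cnj (l2_inner y (e k) * l2_inner (e k) x)) sums cnj (l2_inner (Pop e y) x)"
    using P_inner[OF assms(2,1)] by (subst sums_cnj)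
  moreover have "\<And>k. cnj (l2_inner y (e k) * l2_inner (e k) x) = l2_inner x (e k) * l2_inner (e k) y"
    using l2inner_cnj[OF assms(2) el] l2inner_cnj[OF el assms(1)] by (simp add: mult.commute)
  moreover have "cnj (l2_inner (Pop e y) x) = l2_inner x (Pop e y)"
    using l2inner_cnj[OF assms(1) P_l2[OF assms(2)]] by simp
  ultimately have 2: "(\<lambda>k. l2_inner x (e k) * l2_inner (e k) y) sums l2_inner x (Pop e y)" by simp
  show ?thesis using sums_unique2[OF 1 2] .
qed

lemma P_coef: "x \<in> l2 \<Longrightarrow> l2_inner (Pop e x) (e k) = l2_inner x (e k)"
proof -
  assume x: "x \<in> l2"
  have "(\<lambda>i. l2_inner x (e i) * l2_inner (e i) (e k)) = (\<lambda>i. if i = k then l2_inner x (e k) else 0)"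
    by (auto simp: einner)
  hence "(\<lambda>i. l2_inner x (e i) * l2_inner (e i) (e k)) sums l2_inner x (e k)"
    using sums_single[of k "\<lambda>_. l2_inner x (e k)"] by simp
  thus ?thesis using sums_unique2[OF P_inner[OF x el]] by simp
qed

lemma P_idem: "x \<in> l2 \<Longrightarrow> Pop e (Pop e x) = Pop e x"
  unfolding Pop_def[of e "Pop e x"] using P_coef by (simp add: Pop_def)

lemma P_orth_proj: "orth_proj (Pop e)"
  unfolding orth_proj_def selfadjoint_op_def using P_bounded P_selfadj P_idem by blast

lemma P_fix: "Pop e (e k) = e k"
proof
  fix n
  have "(\<lambda>i. l2_inner (e k) (e i) * e i n) = (\<lambda>i. if i = k then e k n else 0)"
    by (auto simp: einner)
  hence "(\<lambda>i. l2_inner (e k) (e i) * e i n) sums e k n"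
    using sums_single[of k "\<lambda>_. e k n"] by simp
  thus "Pop e (e k) n = e k n" unfolding Pop_def ser_def by (simp add: sums_iff)
qed

lemma P_infinite_rank: "infinite_rank (Pop e)"
  unfolding infinite_rank_def
proof (intro exI conjI allI)
  show "orthonormal_seq e" by (rule e)
  fix k show "e k \<in> Pop e ` l2" using P_fix[of k] el[of k] by (metis image_eqI)
qed

lemma P_compress:
  assumes T: "selfadjoint_op T" and d: "\<And>i k. l2_inner (T (e k)) (e i) = (if k = i then lam else 0)"
    and x: "x \<in> l2"
  shows "Pop e (T (Pop e x)) = (\<lambda>n. lam * Pop e x n)"
proof -
  have Tl: "\<And>y. y \<in> l2 \<Longrightarrow> T y \<in> l2" using T by (simp add: selfadjoint_op_def bounded_op_def)
  have Ts: "\<And>y z. y \<in> l2 \<Longrightarrow> z \<in> l2 \<Longrightarrow> l2_inner (T y) z = l2_inner y (T z)"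
    using T by (simp add: selfadjoint_op_def)
  define u where "u = Pop e x"
  have ul: "u \<in> l2" unfolding u_def by (rule P_l2[OF x])
  have cf: "l2_inner (T u) (e i) = lam * l2_inner x (e i)" for i
  proof -
    have "l2_inner (T u) (e i) = l2_inner u (T (e i))" by (rule Ts[OF ul el])
    moreover have "(\<lambda>k. l2_inner x (e k) * l2_inner (e k) (T (e i))) sums l2_inner u (T (e i))"
      unfolding u_def by (rule P_inner[OF x Tl[OF el]])
    moreover have "(\<lambda>k. l2_inner x (e k) * l2_inner (e k) (T (e i))) = (\<lambda>k. if k = i then l2_inner x (e i) * lam else 0)"
    proof (rule ext)
      fix k
      have "l2_inner (e k) (T (e i)) = (if k = i then lam else 0)" using Ts[OF el el, of k i] d[where i=i and k=k] by simp
      then show "l2_inner x (e k) * l2_inner (e k) (T (e i)) = (if k = i then l2_inner x (e i) * lam else 0)"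
        by simp
    qed
    ultimately show ?thesis using sums_single[of i "\<lambda>_. l2_inner x (e i) * lam"] sums_unique2
      by (metis mult.commute)
  qed
  show ?thesis
  proof
    fix n
    have "Pop e (T u) n = (\<Sum>i. lam * (l2_inner x (e i) * e i n))"
      unfolding Pop_def ser_def using cf by (simp add: mult.assoc)
    also have "\<dots> = lam * u n"
      unfolding u_def Pop_def ser_def
      by (rule suminf_mult; rule ser_summable[OF e coef_summable[OF x]])
    finally show "Pop e (T (Pop e x)) n = lam * Pop e x n" unfolding u_def .
  qed
qed

end

lemma Winf_from_seq:
  fixes S :: "'n::finite \<Rightarrow> op" and v :: "real^'n"
  assumes S: "\<forall>j. selfadjoint_op (S j)" and e: "orthonormal_seq e"
    and d: "\<And>j i k. l2_inner (S j (e k)) (e i) = (if k = i then complex_of_real (v $ j) else 0)"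
  shows "(\<chi> j. complex_of_real (v $ j)) \<in> Winf S"
  unfolding Winf_def
proof (intro CollectI exI conjI allI ballI)
  show "orth_proj (Pop e)" by (rule P_orth_proj[OF e])
  show "infinite_rank (Pop e)" by (rule P_infinite_rank[OF e])
  fix j x assume x: "x \<in> l2"
  show "Pop e (S j (Pop e x)) = (\<lambda>n. (\<chi> j. complex_of_real (v $ j)) $ j * Pop e x n)"
    using P_compress[OF e S[rule_format] d x] by simp
qed



lemma op_l2: "bounded_op T \<Longrightarrow> x \<in> l2 \<Longrightarrow> T x \<in> l2"
  by (simp add: bounded_op_def)

lemma op_add: "bounded_op T \<Longrightarrow> x \<in> l2 \<Longrightarrow> y \<in> l2 \<Longrightarrow> T (\<lambda>n. x n + y n) = (\<lambda>n. T x n + T y n)"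
  by (simp add: bounded_op_def)

lemma op_scale: "bounded_op T \<Longrightarrow> x \<in> l2 \<Longrightarrow> T (\<lambda>n. c * x n) = (\<lambda>n. c * T x n)"
  by (simp add: bounded_op_def)

lemma op_zero: "bounded_op T \<Longrightarrow> T (\<lambda>n. 0) = (\<lambda>n. 0)"
  using op_scale[of T "\<lambda>n. 0" 0] l2_zero by simp

lemma op_diff: assumes "bounded_op T" "x \<in> l2" "y \<in> l2"
  shows "T (\<lambda>n. x n - y n) = (\<lambda>n. T x n - T y n)"
proof -
  have "T (\<lambda>n. x n + (-1) * y n) = (\<lambda>n. T x n + T (\<lambda>n. (-1) * y n) n)"
    by (rule op_add[OF assms(1,2) l2_scale[OF assms(3)]])
  also have "T (\<lambda>n. (-1) * y n) = (\<lambda>n. (-1) * T y n)" by (rule op_scale[OF assms(1,3)])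
  finally show ?thesis by simp
qed

lemma op_sum: assumes "bounded_op T" "\<And>a. a \<in> A \<Longrightarrow> f a \<in> l2"
  shows "T (\<lambda>n. \<Sum>a\<in>A. f a n) = (\<lambda>n. \<Sum>a\<in>A. T (f a) n)"
  using assms(2)
proof (induction A rule: infinite_finite_induct)
  case (infinite A) then show ?case using op_zero[OF assms(1)] by simp
next
  case empty then show ?case using op_zero[OF assms(1)] by simp
next
  case (insert a A)
  have fa: "f a \<in> l2" and fA: "\<And>b. b \<in> A \<Longrightarrow> f b \<in> l2" using insert.prems by auto
  have IH: "T (\<lambda>n. \<Sum>a\<in>A. f a n) = (\<lambda>n. \<Sum>a\<in>A. T (f a) n)" using insert.IH fA by blast
  have "T (\<lambda>n. \<Sum>a\<in>insert a A. f a n) = T (\<lambda>n. f a n + (\<Sum>a\<in>A. f a n))"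
    using insert by simp
  also have "\<dots> = (\<lambda>n. T (f a) n + T (\<lambda>n. \<Sum>a\<in>A. f a n) n)"
    by (rule op_add[OF assms(1) fa l2_sum[OF fA]])
  finally show ?case using insert IH by simp
qed

lemma op_lc: assumes "bounded_op T" "\<And>i. i \<in> A \<Longrightarrow> e i \<in> l2"
  shows "T (lc A c e) = lc A c (\<lambda>i. T (e i))"
proof -
  have "T (lc A c e) = (\<lambda>n. \<Sum>i\<in>A. T (\<lambda>n. c i * e i n) n)"
    unfolding lc_def by (rule op_sum[OF assms(1)]) (use assms(2) l2_scale in auto)
  also have "\<dots> = lc A c (\<lambda>i. T (e i))"
    unfolding lc_def using op_scale[OF assms(1)] assms(2) by simp
  finally show ?thesis .
qed

lemma op_boundK: "bounded_op T \<Longrightarrow> \<exists>K\<ge>0. \<forall>x\<in>l2. l2_norm (T x) \<le> K * l2_norm x"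
proof -
  assume "bounded_op T"
  then obtain K where K: "\<forall>x\<in>l2. l2_norm (T x) \<le> K * l2_norm x" by (auto simp: bounded_op_def)
  have "\<forall>x\<in>l2. l2_norm (T x) \<le> max K 0 * l2_norm x"
  proof
    fix x assume x: "x \<in> l2"
    have "K * l2_norm x \<le> max K 0 * l2_norm x"
      by (rule mult_right_mono[OF _ l2_norm_nonneg[OF x]]) simp
    thus "l2_norm (T x) \<le> max K 0 * l2_norm x" using K x by force
  qed
  thus ?thesis by (intro exI[of _ "max K 0"]) auto
qed

lemma norm_zero_inner: assumes "x \<in> l2" "y \<in> l2" "l2_norm x = 0" shows "l2_inner y x = 0"
  using cauchy_schwarz[OF assms(2,1)] assms(3) by simp

lemma gram_schmidt:
  assumes "finite F" "F \<subseteq> l2"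
  shows "\<exists>E m. onb_on {..<m} E \<and> (\<forall>v\<in>l2. (\<forall>i<m. l2_inner v (E i) = 0) \<longrightarrow> (\<forall>f\<in>F. l2_inner v f = 0))"
  using assms
proof (induction F rule: finite_induct)
  case empty
  show ?case by (intro exI[of _ "\<lambda>_. (\<lambda>n. 0)"] exI[of _ 0]) (auto simp: onb_on_def)
next
  case (insert f F)
  from insert obtain E m where onb: "onb_on {..<m} E"
    and orth: "\<forall>v\<in>l2. (\<forall>i<m. l2_inner v (E i) = 0) \<longrightarrow> (\<forall>f\<in>F. l2_inner v f = 0)" by auto
  have fl: "f \<in> l2" using insert by auto
  have El: "\<And>i. i < m \<Longrightarrow> E i \<in> l2" using onb onb_on_l2 by blast
  define c where "c = (\<lambda>i. l2_inner f (E i))"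
  define w where "w = lc {..<m} c E"
  have wl: "w \<in> l2" unfolding w_def by (rule lc_l2) (use El in auto)
  define g where "g = (\<lambda>n. f n - w n)"
  have gl: "g \<in> l2" unfolding g_def by (rule l2_diff[OF fl wl])
  have gE: "l2_inner g (E i) = 0" if "i < m" for i
  proof -
    have "l2_inner g (E i) = l2_inner f (E i) - l2_inner w (E i)"
      unfolding g_def by (rule l2inner_diff_left[OF fl wl El[OF that]])
    also have "l2_inner w (E i) = c i" unfolding w_def by (rule inner_lc_basis[OF onb]) (use that in auto)
    finally show ?thesis unfolding c_def by simp
  qed
  have vw: "l2_inner v w = 0" if "v \<in> l2" "\<forall>i<m. l2_inner v (E i) = 0" for v
    unfolding w_def using inner_lc_right[of "{..<m}" E v c] El that by simp
  have vf: "l2_inner v f = l2_inner v g" if "v \<in> l2" "\<forall>i<m. l2_inner v (E i) = 0" for v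
    unfolding g_def using l2inner_diff_right[OF fl wl that(1)] vw[OF that] by simp
  show ?case
  proof (cases "l2_norm g = 0")
    case True
    have "\<forall>v\<in>l2. (\<forall>i<m. l2_inner v (E i) = 0) \<longrightarrow> (\<forall>f'\<in>insert f F. l2_inner v f' = 0)"
      using orth vf norm_zero_inner[OF gl _ True] by auto
    thus ?thesis using onb by blast
  next
    case False
    have gpos: "l2_norm g > 0" using False l2_norm_nonneg[OF gl] by linarith
    define k where "k = complex_of_real (1 / l2_norm g)"
    define g' where "g' = (\<lambda>n. k * g n)"
    have g'l: "g' \<in> l2" unfolding g'_def by (rule l2_scale[OF gl])
    define E' where "E' = E(m := g')"
    have E'l: "E' i \<in> l2" if "i < Suc m" for i using El g'l that by (auto simp: E'_def)
    have g'E: "l2_inner g' (E i) = 0" if "i < m" for i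
      unfolding g'_def by (simp only: l2inner_scale_left[OF gl El[OF that]] gE[OF that] mult_zero_right)
    have Eg': "l2_inner (E i) g' = 0" if "i < m" for i
      using l2inner_cnj[OF g'l El[OF that]] g'E[OF that] by simp
    have g'g': "l2_inner g' g' = 1"
    proof -
      have "l2_inner g' g' = k * (cnj k * l2_inner g g)"
        unfolding g'_def by (simp only: l2inner_scale_left[OF gl l2_scale[OF gl]] l2inner_scale_right[OF gl gl])
      also have "\<dots> = 1" using l2inner_self[OF gl] gpos unfolding k_def
        by (simp add: power2_eq_square)
      finally show ?thesis .
    qed
    have onb': "onb_on {..<Suc m} E'"
      unfolding onb_on_def
    proof (intro conjI ballI)
      fix i assume "i \<in> {..<Suc m}" thus "E' i \<in> l2" using E'l by simp
    next
      fix i j assume i: "i \<in> {..<Suc m}" and j: "j \<in> {..<Suc m}"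
      show "l2_inner (E' i) (E' j) = (if i = j then 1 else 0)"
      proof (cases "i = m"; cases "j = m")
        assume "i = m" "j = m" thus ?thesis using g'g' by (simp add: E'_def)
      next
        assume "i = m" "j \<noteq> m" thus ?thesis using g'E j by (simp add: E'_def)
      next
        assume "i \<noteq> m" "j = m" thus ?thesis using Eg' i by (simp add: E'_def)
      next
        assume "i \<noteq> m" "j \<noteq> m" thus ?thesis using onb_on_inner[OF onb] i j by (simp add: E'_def)
      qed
    qed
    have "\<forall>v\<in>l2. (\<forall>i<Suc m. l2_inner v (E' i) = 0) \<longrightarrow> (\<forall>f'\<in>insert f F. l2_inner v f' = 0)"
    proof (intro ballI impI)
      fix v f' assume v: "v \<in> l2" and o: "\<forall>i<Suc m. l2_inner v (E' i) = 0" and f': "f' \<in> insert f F"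
      have oE: "\<forall>i<m. l2_inner v (E i) = 0"
      proof (intro allI impI)
        fix i assume "i < m"
        thus "l2_inner v (E i) = 0" using o[rule_format, of i] by (simp add: E'_def)
      qed
      have "l2_inner v g' = 0" using o by (auto simp: E'_def)
      hence "cnj k * l2_inner v g = 0"
        unfolding g'_def by (simp only: l2inner_scale_right[OF gl v])
      hence "l2_inner v g = 0" using gpos unfolding k_def by simp
      thus "l2_inner v f' = 0" using f' orth v oE vf[OF v oE] by auto
    qed
    thus ?thesis using onb' by blast
  qed
qed



lemma approx:
  fixes S :: "'n::finite \<Rightarrow> op"
  assumes S: "\<forall>j. selfadjoint_op (S j)" and mu: "\<mu> \<in> We S" and F: "finite F" "F \<subseteq> l2"
    and dpos: "\<delta> > 0"
  shows "\<exists>z\<in>l2. l2_inner z z = 1 \<and> (\<forall>f\<in>F. l2_inner z f = 0) \<and>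
           (\<forall>j. \<bar>Re (l2_inner (S j z) z) - \<mu> $ j\<bar> < \<delta>)"
proof -
  have Sb: "\<And>j. bounded_op (S j)" using S by (simp add: selfadjoint_op_def)
  obtain E m where onb: "onb_on {..<m} E"
    and gs: "\<forall>v\<in>l2. (\<forall>i<m. l2_inner v (E i) = 0) \<longrightarrow> (\<forall>f\<in>F. l2_inner v f = 0)"
    using gram_schmidt[OF F] by blast
  have El: "\<And>i. i < m \<Longrightarrow> E i \<in> l2" using onb onb_on_l2 by blast
  obtain x where on: "orthonormal_seq x"
    and lim: "\<And>j. (\<lambda>k. l2_inner (S j (x k)) (x k)) \<longlonglongrightarrow> complex_of_real (\<mu> $ j)"
    using mu unfolding We_def by blast
  have xl: "\<And>k. x k \<in> l2" using on by (simp add: orthonormal_seq_def)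
  have xx: "\<And>k. l2_inner (x k) (x k) = 1" using on by (simp add: orthonormal_seq_def)
  have xn: "l2_norm (x k) = 1" for k
  proof -
    have "complex_of_real ((l2_norm (x k))^2) = 1" using l2inner_self[OF xl] xx by simp
    hence "(l2_norm (x k))^2 = 1" using of_real_eq_1_iff by blast
    thus ?thesis using l2_norm_nonneg[OF xl[of k]] by (auto simp: power2_eq_1_iff)
  qed
  define c where "c = (\<lambda>k i. l2_inner (x k) (E i))"
  define w where "w = (\<lambda>k. lc {..<m} (c k) E)"
  define y where "y = (\<lambda>k. (\<lambda>n. x k n - w k n))"
  have wl: "w k \<in> l2" for k unfolding w_def by (rule lc_l2) (use El in auto)
  have yl: "y k \<in> l2" for k unfolding y_def by (rule l2_diff[OF xl wl])
  have c0: "(\<lambda>k. c k i) \<longlonglongrightarrow> 0" if "i < m" for i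
  proof -
    have "(\<lambda>k. cnj (l2_inner (E i) (x k))) \<longlonglongrightarrow> cnj 0"
      by (intro tendsto_cnj bessel_seq_tendsto[OF on El[OF that]])
    moreover have "\<And>k. cnj (l2_inner (E i) (x k)) = c k i"
      unfolding c_def using l2inner_cnj[OF El[OF that] xl] by simp
    ultimately show ?thesis by simp
  qed
  have wsq: "(l2_norm (w k))^2 = (\<Sum>i<m. (cmod (c k i))^2)" for k
    unfolding w_def by (rule norm_lc_sq[OF onb]) simp
  have wsq0: "(\<lambda>k. (l2_norm (w k))^2) \<longlonglongrightarrow> 0"
  proof -
    have "(\<lambda>k. \<Sum>i<m. (cmod (c k i))^2) \<longlonglongrightarrow> (\<Sum>i<m. (cmod 0)^2)"
      by (intro tendsto_sum tendsto_power tendsto_norm c0) simp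
    thus ?thesis unfolding wsq by simp
  qed
  have wn0: "(\<lambda>k. l2_norm (w k)) \<longlonglongrightarrow> 0"
  proof -
    have "(\<lambda>k. sqrt ((l2_norm (w k))^2)) \<longlonglongrightarrow> sqrt 0" by (intro tendsto_real_sqrt wsq0)
    thus ?thesis using l2_norm_nonneg[OF wl] by simp
  qed
  have yE: "l2_inner (y k) (E i) = 0" if "i < m" for k i
  proof -
    have "l2_inner (y k) (E i) = l2_inner (x k) (E i) - l2_inner (w k) (E i)"
      unfolding y_def by (rule l2inner_diff_left[OF xl wl El[OF that]])
    also have "l2_inner (w k) (E i) = c k i" unfolding w_def by (rule inner_lc_basis[OF onb]) (use that in auto)
    finally show ?thesis unfolding c_def by simp
  qed
  have yF: "\<forall>f\<in>F. l2_inner (y k) f = 0" for k using gs yl yE by blast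
  have xw: "l2_inner (x k) (w k) = complex_of_real ((l2_norm (w k))^2)" for k
  proof -
    have "l2_inner (x k) (w k) = (\<Sum>i<m. cnj (c k i) * c k i)"
      unfolding w_def using inner_lc_right[of "{..<m}" E "x k" "c k"] El xl by (simp add: c_def)
    also have "\<dots> = complex_of_real (\<Sum>i<m. (cmod (c k i))^2)"
      using sum_mult_cnj[of "c k" "{..<m}"] by (simp add: mult.commute)
    finally show ?thesis using wsq by simp
  qed
  have wx: "l2_inner (w k) (x k) = complex_of_real ((l2_norm (w k))^2)" for k
    using l2inner_cnj[OF xl wl, of k] xw[of k] by simp
  have ysq: "(l2_norm (y k))^2 = 1 - (l2_norm (w k))^2" for k
  proof -
    have "l2_inner (y k) (y k) = l2_inner (x k) (x k) - l2_inner (x k) (w k) - (l2_inner (w k) (x k) - l2_inner (w k) (w k))"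
      unfolding y_def using l2inner_diff_left[OF xl wl yl[unfolded y_def]] l2inner_diff_right[OF xl wl xl]
        l2inner_diff_right[OF xl wl wl] by simp
    also have "\<dots> = complex_of_real (1 - (l2_norm (w k))^2)"
      using xx xw wx l2inner_self[OF wl] by simp
    finally have h: "l2_inner (y k) (y k) = complex_of_real (1 - (l2_norm (w k))^2)" .
    hence "complex_of_real ((l2_norm (y k))^2) = complex_of_real (1 - (l2_norm (w k))^2)"
      by (simp only: l2inner_self[OF yl, of k])
    thus ?thesis by (simp only: of_real_eq_iff)
  qed
  have yn1: "l2_norm (y k) \<le> 1" for k
  proof -
    have "(l2_norm (y k))^2 \<le> 1^2" using ysq[of k] by simp
    thus ?thesis using power2_le_imp_le[of "l2_norm (y k)" 1] by simp
  qed
  have yn: "(\<lambda>k. l2_norm (y k)) \<longlonglongrightarrow> 1"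
  proof -
    have "(\<lambda>k. sqrt (1 - (l2_norm (w k))^2)) \<longlonglongrightarrow> sqrt (1 - 0)"
      by (intro tendsto_real_sqrt tendsto_diff tendsto_const wsq0)
    moreover have "sqrt (1 - (l2_norm (w k))^2) = l2_norm (y k)" for k
    proof -
      have "sqrt ((l2_norm (y k))^2) = l2_norm (y k)" using l2_norm_nonneg[OF yl[of k]] by simp
      thus ?thesis using ysq[of k] by simp
    qed
    ultimately show ?thesis by simp
  qed
  have Sy: "(\<lambda>k. l2_inner (S j (y k)) (y k)) \<longlonglongrightarrow> complex_of_real (\<mu> $ j)" for j
  proof -
    obtain K where K0: "K \<ge> 0" and K: "\<forall>v\<in>l2. l2_norm (S j v) \<le> K * l2_norm v"
      using op_boundK[OF Sb] by blast
    have Sxl: "S j (x k) \<in> l2" for k by (rule op_l2[OF Sb xl])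
    have Swl: "S j (w k) \<in> l2" for k by (rule op_l2[OF Sb wl])
    have eq: "l2_inner (S j (y k)) (y k) - l2_inner (S j (x k)) (x k) =
        - l2_inner (S j (w k)) (y k) - l2_inner (S j (x k)) (w k)" for k
    proof -
      have "S j (y k) = (\<lambda>n. S j (x k) n - S j (w k) n)"
        unfolding y_def by (rule op_diff[OF Sb xl wl])
      hence "l2_inner (S j (y k)) (y k) = l2_inner (S j (x k)) (y k) - l2_inner (S j (w k)) (y k)"
        using l2inner_diff_left[OF Sxl Swl yl] by simp
      moreover have "l2_inner (S j (x k)) (y k) = l2_inner (S j (x k)) (x k) - l2_inner (S j (x k)) (w k)"
        unfolding y_def by (rule l2inner_diff_right[OF xl wl Sxl])
      ultimately show ?thesis by simp
    qed
    have bnd: "norm (l2_inner (S j (y k)) (y k) - l2_inner (S j (x k)) (x k)) \<le> 2 * K * l2_norm (w k)" for k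
    proof -
      have a: "norm (l2_inner (S j (w k)) (y k)) \<le> K * l2_norm (w k)"
      proof -
        have "norm (l2_inner (S j (w k)) (y k)) \<le> l2_norm (S j (w k)) * l2_norm (y k)"
          by (rule cauchy_schwarz[OF Swl yl])
        also have "\<dots> \<le> (K * l2_norm (w k)) * 1"
          by (rule mult_mono) (use K wl yn1 l2_norm_nonneg[OF wl] l2_norm_nonneg[OF yl] K0 in auto)
        finally show ?thesis by simp
      qed
      have b: "norm (l2_inner (S j (x k)) (w k)) \<le> K * l2_norm (w k)"
      proof -
        have "norm (l2_inner (S j (x k)) (w k)) \<le> l2_norm (S j (x k)) * l2_norm (w k)"
          by (rule cauchy_schwarz[OF Sxl wl])
        also have "\<dots> \<le> (K * 1) * l2_norm (w k)"
          by (rule mult_right_mono) (use K[rule_format, OF xl[of k]] xn[of k] l2_norm_nonneg[OF wl] in \<open>auto\<close>)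
        finally show ?thesis by simp
      qed
      have "norm (- l2_inner (S j (w k)) (y k) - l2_inner (S j (x k)) (w k))
          \<le> norm (l2_inner (S j (w k)) (y k)) + norm (l2_inner (S j (x k)) (w k))"
        using norm_triangle_ineq4[of "- l2_inner (S j (w k)) (y k)" "l2_inner (S j (x k)) (w k)"] by simp
      thus ?thesis using a b eq[of k] by simp
    qed
    have "(\<lambda>k. l2_inner (S j (y k)) (y k) - l2_inner (S j (x k)) (x k)) \<longlonglongrightarrow> 0"
    proof (rule Lim_null_comparison)
      show "\<forall>\<^sub>F k in sequentially. norm (l2_inner (S j (y k)) (y k) - l2_inner (S j (x k)) (x k)) \<le> 2 * K * l2_norm (w k)"
        using bnd by simp
      show "(\<lambda>k. 2 * K * l2_norm (w k)) \<longlonglongrightarrow> 0"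
        using tendsto_mult[OF tendsto_const wn0, of "2 * K"] by simp
    qed
    hence "(\<lambda>k. (l2_inner (S j (y k)) (y k) - l2_inner (S j (x k)) (x k)) + l2_inner (S j (x k)) (x k))
        \<longlonglongrightarrow> 0 + complex_of_real (\<mu> $ j)"
      by (intro tendsto_add lim)
    thus ?thesis by simp
  qed
  define r where "r = (\<lambda>k. complex_of_real (1 / l2_norm (y k)))"
  define z where "z = (\<lambda>k. (\<lambda>n. r k * y k n))"
  have zl: "z k \<in> l2" for k unfolding z_def by (rule l2_scale[OF yl])
  have r1: "r \<longlonglongrightarrow> 1"
  proof -
    have "(\<lambda>k. complex_of_real (1 / l2_norm (y k))) \<longlonglongrightarrow> complex_of_real (1 / 1)"
      by (intro tendsto_of_real tendsto_divide tendsto_const yn) simp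
    thus ?thesis unfolding r_def by simp
  qed
  have rcnj: "cnj (r k) = r k" for k unfolding r_def by simp
  have Sz: "l2_inner (S j (z k)) (z k) = r k * r k * l2_inner (S j (y k)) (y k)" for j k
  proof -
    have "S j (z k) = (\<lambda>n. r k * S j (y k) n)" unfolding z_def by (rule op_scale[OF Sb yl])
    hence "l2_inner (S j (z k)) (z k) = r k * l2_inner (S j (y k)) (z k)"
      using l2inner_scale_left[OF op_l2[OF Sb yl] zl] by simp
    also have "l2_inner (S j (y k)) (z k) = cnj (r k) * l2_inner (S j (y k)) (y k)"
      unfolding z_def by (rule l2inner_scale_right[OF yl op_l2[OF Sb yl]])
    finally show ?thesis using rcnj by (simp add: mult.assoc)
  qed
  have Szlim: "(\<lambda>k. Re (l2_inner (S j (z k)) (z k))) \<longlonglongrightarrow> \<mu> $ j" for j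
  proof -
    have "(\<lambda>k. r k * r k * l2_inner (S j (y k)) (y k)) \<longlonglongrightarrow> 1 * 1 * complex_of_real (\<mu> $ j)"
      by (intro tendsto_mult r1 Sy)
    hence "(\<lambda>k. Re (r k * r k * l2_inner (S j (y k)) (y k))) \<longlonglongrightarrow> Re (1 * 1 * complex_of_real (\<mu> $ j))"
      by (rule tendsto_Re)
    thus ?thesis using Sz by simp
  qed
  have ev1: "\<forall>\<^sub>F k in sequentially. l2_norm (y k) > 0"
    using order_tendstoD(1)[OF yn, of 0] by simp
  have ev2: "\<forall>\<^sub>F k in sequentially. \<forall>j. \<bar>Re (l2_inner (S j (z k)) (z k)) - \<mu> $ j\<bar> < \<delta>"
  proof (rule eventually_all_finite)
    fix j
    show "\<forall>\<^sub>F k in sequentially. \<bar>Re (l2_inner (S j (z k)) (z k)) - \<mu> $ j\<bar> < \<delta>"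
      using tendstoD[OF Szlim dpos] by (simp add: dist_real_def)
  qed
  obtain k where k1: "l2_norm (y k) > 0" and k2: "\<forall>j. \<bar>Re (l2_inner (S j (z k)) (z k)) - \<mu> $ j\<bar> < \<delta>"
    using eventually_happens'[OF _ eventually_conj[OF ev1 ev2]] by auto
  have zz: "l2_inner (z k) (z k) = 1"
  proof -
    have "l2_inner (z k) (z k) = r k * (cnj (r k) * l2_inner (y k) (y k))"
      unfolding z_def by (simp only: l2inner_scale_left[OF yl l2_scale[OF yl]] l2inner_scale_right[OF yl yl])
    also have "\<dots> = 1" using k1 l2inner_self[OF yl, of k] unfolding r_def
      by (simp add: power2_eq_square)
    finally show ?thesis .
  qed
  have zF: "\<forall>f\<in>F. l2_inner (z k) f = 0"
  proof
    fix f assume f: "f \<in> F"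
    have "l2_inner (z k) f = r k * l2_inner (y k) f"
      unfolding z_def by (rule l2inner_scale_left[OF yl]) (use f F in auto)
    thus "l2_inner (z k) f = 0" using yF f by simp
  qed
  show ?thesis using zl zz zF k2 by blast
qed



lemma seq_build:
  fixes S :: "'n::finite \<Rightarrow> op" and m :: nat
  assumes S: "\<forall>j. selfadjoint_op (S j)" and F: "finite F" "F \<subseteq> l2" and dpos: "\<delta> > 0"
  shows "(\<forall>i<m. t i \<in> We S) \<Longrightarrow> \<exists>y. (\<forall>i<m. y i \<in> l2 \<and> l2_inner (y i) (y i) = 1 \<and>
      (\<forall>f\<in>F. l2_inner (y i) f = 0) \<and> (\<forall>j. \<bar>Re (l2_inner (S j (y i)) (y i)) - t i $ j\<bar> < \<delta>)) \<and>
      (\<forall>i<m. \<forall>k<m. i \<noteq> k \<longrightarrow> l2_inner (y i) (y k) = 0 \<and> (\<forall>j. l2_inner (S j (y i)) (y k) = 0))"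
proof (induction m)
  case 0 show ?case by simp
next
  case (Suc m)
  have Sb: "\<And>j. bounded_op (S j)" using S by (simp add: selfadjoint_op_def)
  have Ss: "\<And>j a b. a \<in> l2 \<Longrightarrow> b \<in> l2 \<Longrightarrow> l2_inner (S j a) b = l2_inner a (S j b)"
    using S by (simp add: selfadjoint_op_def)
  from Suc obtain y where
    y1: "\<forall>i<m. y i \<in> l2 \<and> l2_inner (y i) (y i) = 1 \<and>
      (\<forall>f\<in>F. l2_inner (y i) f = 0) \<and> (\<forall>j. \<bar>Re (l2_inner (S j (y i)) (y i)) - t i $ j\<bar> < \<delta>)" and
    y2: "\<forall>i<m. \<forall>k<m. i \<noteq> k \<longrightarrow> l2_inner (y i) (y k) = 0 \<and> (\<forall>j. l2_inner (S j (y i)) (y k) = 0)"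
    by auto
  have yl: "\<And>i. i < m \<Longrightarrow> y i \<in> l2" using y1 by blast
  define F' where "F' = F \<union> y ` {..<m} \<union> (\<Union>j. (\<lambda>i. S j (y i)) ` {..<m})"
  have F'fin: "finite F'" unfolding F'_def using F by auto
  have F'l2: "F' \<subseteq> l2" unfolding F'_def using F yl op_l2[OF Sb] by auto
  obtain z where zl: "z \<in> l2" and zz: "l2_inner z z = 1" and zF: "\<forall>f\<in>F'. l2_inner z f = 0"
    and zt: "\<forall>j. \<bar>Re (l2_inner (S j z) z) - t m $ j\<bar> < \<delta>"
    using approx[OF S _ F'fin F'l2 dpos, of "t m"] Suc.prems by auto
  have zy: "l2_inner z (y i) = 0" if "i < m" for i using zF that unfolding F'_def by auto
  have zSy: "l2_inner z (S j (y i)) = 0" if "i < m" for i j using zF that unfolding F'_def by auto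
  have yz: "l2_inner (y i) z = 0" if "i < m" for i using l2inner_cnj[OF zl yl[OF that]] zy[OF that] by simp
  have Syz: "l2_inner (S j (y i)) z = 0" if "i < m" for i j
    using l2inner_cnj[OF zl op_l2[OF Sb yl[OF that]]] zSy[OF that] by simp
  have Szy: "l2_inner (S j z) (y i) = 0" if "i < m" for i j
    using Ss[OF zl yl[OF that]] zSy[OF that] by simp
  define y' where "y' = y(m := z)"
  show ?case
  proof (intro exI[of _ y'] conjI)
    show "\<forall>i<Suc m. y' i \<in> l2 \<and> l2_inner (y' i) (y' i) = 1 \<and>
      (\<forall>f\<in>F. l2_inner (y' i) f = 0) \<and> (\<forall>j. \<bar>Re (l2_inner (S j (y' i)) (y' i)) - t i $ j\<bar> < \<delta>)"
    proof (intro allI impI)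
      fix i assume i: "i < Suc m"
      show "y' i \<in> l2 \<and> l2_inner (y' i) (y' i) = 1 \<and>
        (\<forall>f\<in>F. l2_inner (y' i) f = 0) \<and> (\<forall>j. \<bar>Re (l2_inner (S j (y' i)) (y' i)) - t i $ j\<bar> < \<delta>)"
      proof (cases "i = m")
        case True thus ?thesis using zl zz zF zt unfolding y'_def F'_def by auto
      next
        case False thus ?thesis using y1 i unfolding y'_def by auto
      qed
    qed
  next
    show "\<forall>i<Suc m. \<forall>k<Suc m. i \<noteq> k \<longrightarrow> l2_inner (y' i) (y' k) = 0 \<and> (\<forall>j. l2_inner (S j (y' i)) (y' k) = 0)"
    proof (intro allI impI)
    fix i k assume i: "i < Suc m" and k: "k < Suc m" and ik: "i \<noteq> k"
    show "l2_inner (y' i) (y' k) = 0 \<and> (\<forall>j. l2_inner (S j (y' i)) (y' k) = 0)"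
    proof (cases "i = m")
      case True
      then have "k < m" using k ik by simp
      thus ?thesis using True zy Szy unfolding y'_def by auto
    next
      case False
      then have im: "i < m" using i by simp
      show ?thesis
      proof (cases "k = m")
        case True thus ?thesis using im yz Syz False unfolding y'_def by auto
      next
        case False
        thus ?thesis using im k ik y2 \<open>i \<noteq> m\<close> unfolding y'_def by auto
      qed
    qed
    qed
  qed
qed



lemma real_val: "cnj q = q \<Longrightarrow> q = complex_of_real (Re q)"
  by (simp add: complex_eq_iff)

lemma hull_contains:
  fixes lam :: "real^'n::finite" and \<nu> :: "nat \<Rightarrow> real^'n" and t :: "nat \<Rightarrow> real^'n"
  assumes rho: "\<rho> > 0" and N: "bij_betw h {0..<N} (UNIV :: ('n \<times> bool) set)"
    and t: "\<And>i. t i = lam + (if snd (h i) then \<rho> else - \<rho>) *\<^sub>R axis (fst (h i)) 1"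
    and close: "\<And>i j. i < N \<Longrightarrow> \<bar>\<nu> i $ j - t i $ j\<bar> < \<rho> / (2 * real CARD('n))"
  shows "lam \<in> convex hull (\<nu> ` {..<N})"
proof (rule ccontr)
  assume nin: "lam \<notin> convex hull (\<nu> ` {..<N})"
  have cl: "closed (convex hull (\<nu> ` {..<N}))"
    by (intro compact_imp_closed compact_convex_hull finite_imp_compact) simp
  obtain a b where ab1: "inner a lam < b" and ab2: "\<forall>x\<in>convex hull (\<nu> ` {..<N}). b < inner a x"
    using separating_hyperplane_closed_point[OF convex_convex_hull cl nin] by blast
  define M where "M = Max (range (\<lambda>j. \<bar>a $ j\<bar>))"
  have "M \<in> range (\<lambda>j. \<bar>a $ j\<bar>)" unfolding M_def by (rule Max_in) auto
  then obtain j0 where j0: "M = \<bar>a $ j0\<bar>" by auto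
  have Mge: "\<bar>a $ j\<bar> \<le> M" for j unfolding M_def by (rule Max_ge) auto
  have Mpos: "M > 0"
  proof (rule ccontr)
    assume "\<not> M > 0"
    hence "\<And>j. a $ j = 0" using Mge by (meson abs_le_zero_iff order.trans not_less)
    hence "a = 0" by (simp add: vec_eq_iff)
    have "N > 0" using N by (cases N) (auto simp: bij_betw_def)
    hence "\<nu> 0 \<in> convex hull (\<nu> ` {..<N})" by (intro hull_inc) auto
    thus False using ab1 ab2 \<open>a = 0\<close> by force
  qed
  define b0 where "b0 = (a $ j0 < 0)"
  define i0 where "i0 = inv_into {0..<N} h (j0, b0)"
  have i0N: "i0 < N" unfolding i0_def using inv_into_into[of "(j0,b0)" h "{0..<N}"] N
    by (auto simp: bij_betw_def)
  have hi0: "h i0 = (j0, b0)" unfolding i0_def using N by (simp add: bij_betw_inv_into_right)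
  define s where "s = (if b0 then \<rho> else - \<rho>)"
  have ti0: "t i0 = lam + s *\<^sub>R axis j0 1" unfolding s_def using t[of i0] hi0 by simp
  have "inner a (s *\<^sub>R axis j0 1) = s * a $ j0" by (simp add: inner_axis)
  also have "\<dots> = - \<rho> * M" unfolding s_def b0_def j0 by auto
  finally have at: "inner a (t i0) = inner a lam - \<rho> * M" unfolding ti0 by (simp add: inner_add_right)
  have "inner a (\<nu> i0 - t i0) = (\<Sum>j\<in>UNIV. a $ j * (\<nu> i0 - t i0) $ j)" by (simp add: inner_vec_def)
  also have "\<dots> \<le> (\<Sum>j\<in>(UNIV::'n set). M * (\<rho> / (2 * real CARD('n))))"
  proof (rule sum_mono)
    fix j
    have "a $ j * (\<nu> i0 - t i0) $ j \<le> \<bar>a $ j\<bar> * \<bar>(\<nu> i0 - t i0) $ j\<bar>"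
      by (metis abs_ge_self abs_mult)
    also have "\<dots> \<le> M * (\<rho> / (2 * real CARD('n)))"
      using close[OF i0N, of j] Mge[of j] by (intro mult_mono) auto
    finally show "a $ j * (\<nu> i0 - t i0) $ j \<le> M * (\<rho> / (2 * real CARD('n)))" .
  qed
  also have "\<dots> = \<rho> * M / 2" by simp
  finally have h: "inner a (\<nu> i0 - t i0) \<le> \<rho> * M / 2" .
  have "inner a (\<nu> i0) \<le> inner a lam - \<rho> * M / 2"
    using h at unfolding inner_diff_right by linarith
  also have "\<dots> < b"
  proof -
    have "0 < \<rho> * M" using rho Mpos by simp
    thus ?thesis using ab1 by linarith
  qed
  finally have "inner a (\<nu> i0) < b" .
  moreover have "\<nu> i0 \<in> convex hull (\<nu> ` {..<N})" using i0N by (intro hull_inc) auto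
  ultimately show False using ab2 by (meson not_less_iff_gr_or_eq order.strict_trans)
qed



lemma exact_vec:
  fixes S :: "'n::finite \<Rightarrow> op"
  assumes S: "\<forall>j. selfadjoint_op (S j)" and lam: "lam \<in> interior (We S)"
    and F: "finite F" "F \<subseteq> l2"
  shows "\<exists>x\<in>l2. l2_inner x x = 1 \<and> (\<forall>f\<in>F. l2_inner x f = 0) \<and>
           (\<forall>j. l2_inner (S j x) x = complex_of_real (lam $ j))"
proof -
  have Sb: "\<And>j. bounded_op (S j)" using S by (simp add: selfadjoint_op_def)
  have Ss: "\<And>j a b. a \<in> l2 \<Longrightarrow> b \<in> l2 \<Longrightarrow> l2_inner (S j a) b = l2_inner a (S j b)"
    using S by (simp add: selfadjoint_op_def)
  obtain r where r: "r > 0" "ball lam r \<subseteq> We S" using lam mem_interior by blast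
  define \<rho> where "\<rho> = r / 2"
  have rho: "\<rho> > 0" unfolding \<rho>_def using r by simp
  define \<delta> where "\<delta> = \<rho> / (2 * real CARD('n))"
  have dpos: "\<delta> > 0" unfolding \<delta>_def using rho by simp
  define N where "N = card (UNIV :: ('n \<times> bool) set)"
  obtain h where h: "bij_betw h {0..<N} (UNIV :: ('n \<times> bool) set)"
    unfolding N_def using ex_bij_betw_nat_finite[of "UNIV :: ('n \<times> bool) set"] by auto
  define t where "t = (\<lambda>i. lam + (if snd (h i) then \<rho> else - \<rho>) *\<^sub>R axis (fst (h i)) (1::real))"
  have tW: "\<forall>i<N. t i \<in> We S"
  proof (intro allI impI)
    fix i
    have "dist lam (t i) = \<rho>" unfolding t_def using rho by (simp add: dist_norm)
    hence "t i \<in> ball lam r" using r unfolding \<rho>_def by simp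
    thus "t i \<in> We S" using r by blast
  qed
  obtain y where
    y1: "\<forall>i<N. y i \<in> l2 \<and> l2_inner (y i) (y i) = 1 \<and>
      (\<forall>f\<in>F. l2_inner (y i) f = 0) \<and> (\<forall>j. \<bar>Re (l2_inner (S j (y i)) (y i)) - t i $ j\<bar> < \<delta>)" and
    y2: "\<forall>i<N. \<forall>k<N. i \<noteq> k \<longrightarrow> l2_inner (y i) (y k) = 0 \<and> (\<forall>j. l2_inner (S j (y i)) (y k) = 0)"
    using seq_build[OF S F dpos tW] by blast
  define \<nu> where "\<nu> = (\<lambda>i. \<chi> j. Re (l2_inner (S j (y i)) (y i)))"
  have lamH: "lam \<in> convex hull (\<nu> ` {..<N})"
  proof (rule hull_contains[OF rho h])
    show "\<And>i. t i = lam + (if snd (h i) then \<rho> else - \<rho>) *\<^sub>R axis (fst (h i)) 1" unfolding t_def by simp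
    show "\<And>i j. i < N \<Longrightarrow> \<bar>\<nu> i $ j - t i $ j\<bar> < \<rho> / (2 * real CARD('n))"
      using y1 unfolding \<nu>_def \<delta>_def by simp
  qed
  then obtain T u where T: "finite T" "T \<subseteq> \<nu> ` {..<N}" and u0: "\<forall>v\<in>T. 0 \<le> u v"
    and u1: "sum u T = 1" and u2: "(\<Sum>v\<in>T. u v *\<^sub>R v) = lam"
    unfolding convex_hull_explicit by blast
  define g where "g = inv_into {..<N} \<nu>"
  have gN: "g v < N" if "v \<in> T" for v
  proof -
    have "inv_into {..<N} \<nu> v \<in> {..<N}" by (rule inv_into_into) (use T that in auto)
    thus ?thesis unfolding g_def by simp
  qed
  have \<nu>g: "\<nu> (g v) = v" if "v \<in> T" for v unfolding g_def using T that by (auto intro!: f_inv_into_f)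
  have ginj: "inj_on g T" by (metis \<nu>g inj_onI)
  define A where "A = g ` T"
  have AN: "\<And>i. i \<in> A \<Longrightarrow> i < N" unfolding A_def using gN by auto
  have Afin: "finite A" unfolding A_def using T by simp
  have yl: "\<And>i. i \<in> A \<Longrightarrow> y i \<in> l2" using y1 AN by blast
  have onb: "onb_on A y" unfolding onb_on_def using y1 y2 AN by auto
  define wt where "wt = (\<lambda>i. u (\<nu> i))"
  have reidx: "(\<Sum>i\<in>A. f i) = (\<Sum>v\<in>T. f (g v))" for f :: "nat \<Rightarrow> 'b::comm_monoid_add"
    unfolding A_def by (simp add: sum.reindex[OF ginj])
  have wt0: "\<And>i. i \<in> A \<Longrightarrow> 0 \<le> wt i" unfolding wt_def A_def using u0 \<nu>g by auto
  have wt1: "(\<Sum>i\<in>A. wt i) = 1" unfolding reidx wt_def using u1 \<nu>g by (simp cong: sum.cong)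
  have wt2: "(\<Sum>i\<in>A. wt i * \<nu> i $ j) = lam $ j" for j
  proof -
    have "(\<Sum>i\<in>A. wt i * \<nu> i $ j) = (\<Sum>v\<in>T. u v * v $ j)" unfolding reidx wt_def using \<nu>g by (simp cong: sum.cong)
    also have "\<dots> = (\<Sum>v\<in>T. u v *\<^sub>R v) $ j" by simp
    finally show ?thesis using u2 by simp
  qed
  define c where "c = (\<lambda>i. complex_of_real (sqrt (wt i)))"
  have cc: "c i * cnj (c i) = complex_of_real (wt i)" if "i \<in> A" for i
    unfolding c_def using wt0[OF that] by (simp flip: of_real_mult)
  define x where "x = lc A c y"
  have xl: "x \<in> l2" unfolding x_def by (rule lc_l2[OF yl])
  have xx: "l2_inner x x = 1"
  proof -
    have "l2_inner x x = (\<Sum>i\<in>A. c i * cnj (c i))" unfolding x_def by (rule inner_lc_lc[OF onb Afin])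
    also have "\<dots> = (\<Sum>i\<in>A. complex_of_real (wt i))" by (rule sum.cong[OF refl]) (rule cc)
    also have "\<dots> = 1" using wt1 by (simp flip: of_real_sum)
    finally show ?thesis .
  qed
  have xF: "\<forall>f\<in>F. l2_inner x f = 0"
  proof
    fix f assume f: "f \<in> F"
    have "l2_inner x f = (\<Sum>i\<in>A. c i * l2_inner (y i) f)"
      unfolding x_def by (rule inner_lc_left[OF yl]) (use f F in auto)
    also have "\<dots> = 0" using y1 AN f by (intro sum.neutral) auto
    finally show "l2_inner x f = 0" .
  qed
  have xS: "l2_inner (S j x) x = complex_of_real (lam $ j)" for j
  proof -
    have Syl: "\<And>i. i \<in> A \<Longrightarrow> S j (y i) \<in> l2" using op_l2[OF Sb] yl by blast
    have real: "l2_inner (S j (y i)) (y i) = complex_of_real (\<nu> i $ j)" if "i \<in> A" for i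
    proof -
      have "cnj (l2_inner (S j (y i)) (y i)) = l2_inner (S j (y i)) (y i)"
        using l2inner_cnj[OF Syl[OF that] yl[OF that]] Ss[OF yl[OF that] yl[OF that]] by simp
      thus ?thesis unfolding \<nu>_def using real_val by simp
    qed
    have inner_i: "l2_inner (S j (y i)) x = cnj (c i) * complex_of_real (\<nu> i $ j)" if "i \<in> A" for i
    proof -
      have "l2_inner (S j (y i)) x = (\<Sum>k\<in>A. cnj (c k) * l2_inner (S j (y i)) (y k))"
        unfolding x_def by (rule inner_lc_right[OF yl Syl[OF that]])
      also have "\<dots> = (\<Sum>k\<in>A. if k = i then cnj (c i) * complex_of_real (\<nu> i $ j) else 0)"
      proof (rule sum.cong[OF refl])
        fix k assume k: "k \<in> A"
        show "cnj (c k) * l2_inner (S j (y i)) (y k) = (if k = i then cnj (c i) * complex_of_real (\<nu> i $ j) else 0)"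
          using real[OF that] y2 AN[OF k] AN[OF that] by auto
      qed
      also have "\<dots> = cnj (c i) * complex_of_real (\<nu> i $ j)" using Afin that by simp
      finally show ?thesis .
    qed
    have "S j x = lc A c (\<lambda>i. S j (y i))" unfolding x_def by (rule op_lc[OF Sb yl])
    hence "l2_inner (S j x) x = (\<Sum>i\<in>A. c i * l2_inner (S j (y i)) x)"
      using inner_lc_left[OF Syl xl] by simp
    also have "\<dots> = (\<Sum>i\<in>A. complex_of_real (wt i * \<nu> i $ j))"
    proof (rule sum.cong[OF refl])
      fix i assume i: "i \<in> A"
      have "c i * l2_inner (S j (y i)) x = (c i * cnj (c i)) * complex_of_real (\<nu> i $ j)"
        using inner_i[OF i] by (simp add: mult.assoc)
      also have "\<dots> = complex_of_real (wt i * \<nu> i $ j)" using cc[OF i] by simp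
      finally show "c i * l2_inner (S j (y i)) x = complex_of_real (wt i * \<nu> i $ j)" .
    qed
    also have "\<dots> = complex_of_real (\<Sum>i\<in>A. wt i * \<nu> i $ j)" by (rule of_real_sum[symmetric])
    also have "\<dots> = complex_of_real (lam $ j)" using wt2[of j] by (rule arg_cong)
    finally show ?thesis .
  qed
  show ?thesis using xl xx xF xS by blast
qed



primrec Lseq :: "(vec list \<Rightarrow> vec) \<Rightarrow> nat \<Rightarrow> vec list" where
  "Lseq g 0 = []"
| "Lseq g (Suc n) = Lseq g n @ [g (Lseq g n)]"

lemma set_Lseq: "set (Lseq g k) = (\<lambda>i. g (Lseq g i)) ` {..<k}"
  by (induction k) (auto simp: lessThan_Suc)

lemma main_lemma:
  fixes S :: "'n::finite \<Rightarrow> op"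
  assumes S: "\<forall>j. selfadjoint_op (S j)" and lam: "lam \<in> interior (We S)"
  shows "(\<chi> j. complex_of_real (lam $ j)) \<in> Winf S"
proof -
  have Sb: "\<And>j. bounded_op (S j)" using S by (simp add: selfadjoint_op_def)
  have Ss: "\<And>j a b. a \<in> l2 \<Longrightarrow> b \<in> l2 \<Longrightarrow> l2_inner (S j a) b = l2_inner a (S j b)"
    using S by (simp add: selfadjoint_op_def)
  define Fs where "Fs = (\<lambda>xs. set xs \<union> (\<Union>j. S j ` set xs))"
  define good where "good = (\<lambda>xs z. z \<in> l2 \<and> l2_inner z z = 1 \<and> (\<forall>f\<in>Fs xs. l2_inner z f = 0) \<and>
      (\<forall>j. l2_inner (S j z) z = complex_of_real (lam $ j)))"
  have ex: "\<exists>z. good xs z" if "set xs \<subseteq> l2" for xs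
  proof -
    have "finite (Fs xs)" unfolding Fs_def by auto
    moreover have "Fs xs \<subseteq> l2" unfolding Fs_def using that op_l2[OF Sb] by auto
    ultimately show ?thesis using exact_vec[OF S lam] unfolding good_def by blast
  qed
  define nxt where "nxt = (\<lambda>xs. SOME z. good xs z)"
  have nxt_eq: "nxt xs = (SOME z. good xs z)" for xs unfolding nxt_def by simp
  define e where "e = (\<lambda>k. nxt (Lseq nxt k))"
  have setL: "set (Lseq nxt k) = e ` {..<k}" for k unfolding e_def by (rule set_Lseq)
  have inv: "set (Lseq nxt k) \<subseteq> l2 \<and> good (Lseq nxt k) (e k)" for k
  proof (induction k rule: less_induct)
    case (less k)
    have s: "set (Lseq nxt k) \<subseteq> l2" unfolding setL using less by (auto simp: good_def)
    have "good (Lseq nxt k) (SOME z. good (Lseq nxt k) z)" by (rule someI_ex[OF ex[OF s]])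
    moreover have "e k = (SOME z. good (Lseq nxt k) z)" unfolding e_def by (rule nxt_eq)
    ultimately show ?case using s by simp
  qed
  have good_e: "good (Lseq nxt k) (e k)" for k using inv by blast
  have el: "e k \<in> l2" for k using good_e[of k] by (simp add: good_def)
  have ee1: "l2_inner (e k) (e k) = 1" for k using good_e[of k] by (simp add: good_def)
  have eS: "l2_inner (S j (e k)) (e k) = complex_of_real (lam $ j)" for j k
    using good_e[of k] by (simp add: good_def)
  have lt1: "l2_inner (e k) (e i) = 0" if "i < k" for i k
    using good_e[of k] that unfolding good_def Fs_def setL by auto
  have lt2: "l2_inner (e k) (S j (e i)) = 0" if "i < k" for i k j
  proof -
    have "S j (e i) \<in> Fs (Lseq nxt k)" unfolding Fs_def setL using that by blast
    thus ?thesis using good_e[of k] unfolding good_def by blast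
  qed
  have on: "orthonormal_seq e"
    unfolding orthonormal_seq_def
  proof (intro conjI allI)
    fix k show "e k \<in> l2" by (rule el)
  next
    fix i k show "l2_inner (e i) (e k) = (if i = k then 1 else 0)"
    proof (cases i k rule: linorder_cases)
      case less thus ?thesis using l2inner_cnj[OF el el, of k i] lt1[OF less] by simp
    next
      case equal thus ?thesis using ee1 by simp
    next
      case greater thus ?thesis using lt1[OF greater] by simp
    qed
  qed
  have d: "l2_inner (S j (e k)) (e i) = (if k = i then complex_of_real (lam $ j) else 0)" for j i k
  proof (cases k i rule: linorder_cases)
    case less
    have "l2_inner (S j (e k)) (e i) = cnj (l2_inner (e i) (S j (e k)))"
      by (rule l2inner_cnj[OF el op_l2[OF Sb el]])
    thus ?thesis using lt2[OF less] less by simp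
  next
    case equal thus ?thesis using eS by simp
  next
    case greater
    have "l2_inner (S j (e k)) (e i) = l2_inner (e k) (S j (e i))" by (rule Ss[OF el el])
    thus ?thesis using lt2[OF greater] greater by simp
  qed
  show ?thesis by (rule Winf_from_seq[OF S on d])
qed

theorem proposition4p1:
  fixes S :: "'n::finite \<Rightarrow> op"
  assumes "\<forall>j. selfadjoint_op (S j)"
  shows "(\<lambda>v. \<chi> j. complex_of_real (v $ j)) ` interior (We S) \<subseteq> Winf S"
  using main_lemma[OF assms] by blast


end
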